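(* Let $n\ge2$ and let $K$ be a kernel as in the context. If $E\subset\mathbb{R}^n$ is a convex body, then $P_K(E\cap C)\le P_K(E)$ for every convex set $C\subset\mathbb{R}^n$.
   Context: A convex body is a compact convex subset of $\mathbb{R}^n$ with non-empty interior. A kernel is a measurable function $K\colon\mathbb{R}^n\to[0,+\infty]$ such that $K(-x)=K(x)$ for a.e. $x\in\mathbb{R}^n$ and $\int_{\mathbb{R}^n}\min\{1,|x|\}\,K(x)\,dx<+\infty$. For a measurable set $E\subset\mathbb{R}^n$, its non-local $K$-perimeter is $P_K(E)=\frac12\int_{\mathbb{R}^n}\int_{\mathbb{R}^n}|\chi_E(x)-\chi_E(y)|\,K(x-y)\,dx\,dy$. *)

theory Defs
  imports "HOL-Analysis.Analysis"
begin

definition is_kernel :: "('a::euclidean_space \<Rightarrow> ennreal) \<Rightarrow> bool" where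
  "is_kernel K \<longleftrightarrow>
     K \<in> borel_measurable lebesgue \<and>
     (AE x in lebesgue. K (- x) = K x) \<and>
     (\<integral>\<^sup>+ x. ennreal (min 1 (norm x)) * K x \<partial>lebesgue) < \<infinity>"

definition perimK :: "('a::euclidean_space \<Rightarrow> ennreal) \<Rightarrow> 'a set \<Rightarrow> ennreal" where
  "perimK K E = (1/2) * (\<integral>\<^sup>+ x. (\<integral>\<^sup>+ y.
      ennreal \<bar>indicator E x - indicator E y\<bar> * K (x - y) \<partial>lebesgue) \<partial>lebesgue)"

definition convex_body :: "'a::euclidean_space set \<Rightarrow> bool" where
  "convex_body E \<longleftrightarrow> compact E \<and> convex E \<and> interior E \<noteq> {}"

end

theory Submission
  imports Defs
begin

lemma sf_leb: "sigma_finite_measure (lebesgue :: 'a::euclidean_space measure)"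
proof
  show "\<exists>A::'a set set. countable A \<and> A \<subseteq> sets lebesgue \<and> \<Union>A = space lebesgue \<and> (\<forall>a\<in>A. emeasure lebesgue a \<noteq> \<infinity>)"
    by (intro exI[of _ "range (\<lambda>n::nat. box (- real n *\<^sub>R One) (real n *\<^sub>R One))"])
       (auto simp: emeasure_lborel_cbox_eq UN_box_eq_UNIV)
qed

lemma psf_leb: "pair_sigma_finite (lebesgue :: 'a::euclidean_space measure) (lebesgue :: 'a measure)"
  by (simp add: pair_sigma_finite_def sf_leb)

lemma id_leb_borel: "(\<lambda>x::'a::euclidean_space. x) \<in> lebesgue \<rightarrow>\<^sub>M borel"
  by (rule measurable_completion) simp

lemma T_reflect: "(\<lambda>z. x + (\<Sum>j\<in>Basis. (-1 * (z \<bullet> j)) *\<^sub>R j)) = (\<lambda>z::'a::euclidean_space. x - z)"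
  by (simp add: fun_eq_iff sum_negf euclidean_representation)

lemma reflect_meas: "(\<lambda>z::'a::euclidean_space. x - z) \<in> lebesgue \<rightarrow>\<^sub>M lebesgue"
  using lebesgue_affine_measurable[of "\<lambda>_. -1" x] by (simp only: T_reflect)

lemma nn_integral_reflect:
  fixes f :: "'a::euclidean_space \<Rightarrow> ennreal"
  assumes f: "f \<in> borel_measurable lebesgue"
  shows "(\<integral>\<^sup>+y. f y \<partial>lebesgue) = (\<integral>\<^sup>+z. f (x - z) \<partial>lebesgue)"
proof -
  note T = T_reflect[of x]
  have "lebesgue = density (distr lebesgue lebesgue (\<lambda>z::'a. x - z)) (\<lambda>_. 1)"
    using lebesgue_affine_euclidean[of "\<lambda>_. -1" x] by (simp only: T) simp
  then have "(\<integral>\<^sup>+y. f y \<partial>lebesgue) = (\<integral>\<^sup>+y. f y \<partial>density (distr lebesgue lebesgue (\<lambda>z::'a. x - z)) (\<lambda>_. 1))"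
    by simp
  also have "\<dots> = (\<integral>\<^sup>+y. f y \<partial>distr lebesgue lebesgue (\<lambda>z::'a. x - z))"
    by (subst nn_integral_density) (auto simp: f)
  also have "\<dots> = (\<integral>\<^sup>+z. f (x - z) \<partial>lebesgue)"
    by (subst nn_integral_distr) (auto simp: f reflect_meas)
  finally show ?thesis .
qed

lemma emeasure_transl:
  "emeasure lebesgue ((\<lambda>x. x - c) ` S) = emeasure lebesgue (S :: 'a::euclidean_space set)"
  using emeasure_lebesgue_affine[of 1 "-c" S] by (simp cong: image_cong_simp)

lemma transl_sets: "E \<in> sets lebesgue \<Longrightarrow> {x. x - c \<in> E} \<in> sets lebesgue"
proof -
  assume "E \<in> sets lebesgue"
  then have "(\<lambda>x. c + x) ` E \<in> sets lebesgue" by (rule lebesgue_sets_translation)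
  also have "(\<lambda>x. c + x) ` E = {x. x - c \<in> (E::'a::euclidean_space set)}"
    by (auto simp: image_iff algebra_simps) (metis add.commute diff_add_cancel)
  finally show ?thesis .
qed

lemma convex_step:
  fixes x y z :: "'a::euclidean_space"
  assumes "convex F" "x \<in> F" "y \<in> F" "y = x + d *\<^sub>R z" "d \<ge> 1"
  shows "y - z \<in> F"
proof -
  have "(1 - (d-1)/d) *\<^sub>R x + ((d-1)/d) *\<^sub>R y \<in> F"
    using assms by (intro convexD) (auto simp: field_simps)
  also have "(1 - (d-1)/d) *\<^sub>R x + ((d-1)/d) *\<^sub>R y = y - z"
  proof -
    have "(1 - (d-1)/d) *\<^sub>R x + ((d-1)/d) *\<^sub>R y = x + ((d-1)/d * d) *\<^sub>R z"
      using assms(4) by (simp add: algebra_simps)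
    also have "(d-1)/d * d = d - 1" using assms(5) by simp
    finally show ?thesis using assms(4) by (simp add: algebra_simps)
  qed
  finally show ?thesis .
qed

lemma gmono:
  fixes E F :: "'a::euclidean_space set"
  assumes cF: "convex F" and sub: "F \<subseteq> E" and bE: "bounded E"
    and mF: "F \<in> sets lebesgue" and mE: "E \<in> sets lebesgue"
  shows "emeasure lebesgue {x\<in>F. x - z \<notin> F} \<le> emeasure lebesgue {x\<in>E. x - z \<notin> E}"
proof (cases "z = 0")
  case True then show ?thesis by simp
next
  case False
  define AF where "AF = {x\<in>F. x - z \<notin> F}"
  define AEs where "AEs = {x\<in>E. x - z \<notin> E}"
  define P where "P k = {x\<in>AF. (\<forall>j\<le>k. x - real j *\<^sub>R z \<in> E) \<and> x - real (Suc k) *\<^sub>R z \<notin> E}" for k :: nat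
  define Q where "Q k = (\<lambda>x. x - real k *\<^sub>R z) ` P k" for k
  have mAF: "AF \<in> sets lebesgue"
  proof -
    have "AF = F \<inter> (UNIV - {x. x - z \<in> F})" by (auto simp: AF_def)
    then show ?thesis using mF transl_sets[OF mF, of z] by auto
  qed
  have mAEs: "AEs \<in> sets lebesgue"
  proof -
    have "AEs = E \<inter> (UNIV - {x. x - z \<in> E})" by (auto simp: AEs_def)
    then show ?thesis using mE transl_sets[OF mE, of z] by auto
  qed
  have mP: "P k \<in> sets lebesgue" for k
  proof -
    have "P k = AF \<inter> (\<Inter>j\<in>{..k}. {x. x - real j *\<^sub>R z \<in> E}) \<inter> (UNIV - {x. x - real (Suc k) *\<^sub>R z \<in> E})"
      by (auto simp: P_def)
    moreover have "(\<Inter>j\<in>{..k}. {x. x - real j *\<^sub>R z \<in> E}) \<in> sets lebesgue"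
      by (intro sets.finite_INT) (auto intro: transl_sets[OF mE])
    ultimately show ?thesis using mAF transl_sets[OF mE, of "real (Suc k) *\<^sub>R z"] by auto
  qed
  have mQ: "Q k \<in> sets lebesgue" for k
  proof -
    have "Q k = (\<lambda>x. (- (real k *\<^sub>R z)) + x) ` P k" unfolding Q_def
      by (rule image_cong) simp_all
    then show ?thesis using lebesgue_sets_translation[OF mP, of "- (real k *\<^sub>R z)" k] by simp
  qed
  have cover: "AF = (\<Union>k. P k)"
  proof
    show "(\<Union>k. P k) \<subseteq> AF" by (auto simp: P_def)
  next
    show "AF \<subseteq> (\<Union>k. P k)"
    proof
      fix x assume xA: "x \<in> AF"
      obtain B where B: "\<And>y. y \<in> E \<Longrightarrow> norm y \<le> B" using bE by (auto simp: bounded_iff)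
      obtain n :: nat where n: "(B + norm x) / norm z < real n" using reals_Archimedean2 by blast
      have "x - real n *\<^sub>R z \<notin> E"
      proof
        assume "x - real n *\<^sub>R z \<in> E"
        then have "norm (x - real n *\<^sub>R z) \<le> B" by (rule B)
        moreover have "real n * norm z - norm x \<le> norm (x - real n *\<^sub>R z)"
          by (metis abs_of_nonneg norm_minus_commute norm_scaleR norm_triangle_ineq2 of_nat_0_le_iff)
        moreover have "B + norm x < real n * norm z" using n False by (simp add: field_simps)
        ultimately show False by simp
      qed
      then have ex: "\<exists>n. x - real n *\<^sub>R z \<notin> E" by blast
      define m where "m = (LEAST n. x - real n *\<^sub>R z \<notin> E)"
      have m1: "x - real m *\<^sub>R z \<notin> E" unfolding m_def by (rule LeastI_ex[OF ex])
      have m2: "x - real j *\<^sub>R z \<in> E" if "j < m" for j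
        using not_less_Least[of j "\<lambda>n. x - real n *\<^sub>R z \<notin> E"] that unfolding m_def by blast
      have "x \<in> E" using xA sub by (auto simp: AF_def)
      then have "m \<noteq> 0" using m1 by (auto intro: Nat.gr0I)
      then obtain k where k: "m = Suc k" using not0_implies_Suc by blast
      have "x \<in> P k" using xA m1 m2 k by (auto simp: P_def)
      then show "x \<in> (\<Union>k. P k)" by blast
    qed
  qed
  have dP: "disjoint_family P"
    unfolding disjoint_family_on_def
  proof (intro ballI impI)
    fix i j :: nat assume "i \<noteq> j"
    show "P i \<inter> P j = {}"
    proof (cases "i < j")
      case True then show ?thesis by (auto simp: P_def simp del: of_nat_Suc)
    next
      case False then have "j < i" using \<open>i \<noteq> j\<close> by simp
      then show ?thesis by (auto simp: P_def simp del: of_nat_Suc)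
    qed
  qed
  have key: "False" if "x \<in> P i" "y \<in> P j" "x - real i *\<^sub>R z = y - real j *\<^sub>R z" "i < j" for x y i j
  proof -
    have "x \<in> F" "y \<in> F" "y - z \<notin> F" using that sub by (auto simp: P_def AF_def)
    moreover have "y = x + real (j - i) *\<^sub>R z" using that(3,4)
      by (simp add: of_nat_diff algebra_simps)
    ultimately show False using convex_step[OF cF, of x y "real (j - i)" z] that(4) by simp
  qed
  have dQ: "disjoint_family Q"
    unfolding disjoint_family_on_def
  proof (intro ballI impI)
    fix i j :: nat assume "i \<noteq> j"
    show "Q i \<inter> Q j = {}"
    proof (cases "i < j")
      case True then show ?thesis using key by (fastforce simp: Q_def)
    next
      case False then have "j < i" using \<open>i \<noteq> j\<close> by simp
      then show ?thesis using key by (fastforce simp: Q_def)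
    qed
  qed
  have QA: "(\<Union>k. Q k) \<subseteq> AEs"
    by (auto simp: Q_def P_def AEs_def algebra_simps)
  have "emeasure lebesgue AF = (\<Sum>k. emeasure lebesgue (P k))"
    by (subst cover, rule suminf_emeasure[symmetric]) (use mP dP in auto)
  also have "\<dots> = (\<Sum>k. emeasure lebesgue (Q k))"
    by (simp add: Q_def emeasure_transl)
  also have "\<dots> = emeasure lebesgue (\<Union>k. Q k)"
    by (rule suminf_emeasure) (use mQ dQ in auto)
  also have "\<dots> \<le> emeasure lebesgue AEs"
    using QA mAEs by (intro emeasure_mono) auto
  finally show ?thesis by (simp add: AF_def AEs_def)
qed


lemma perim_interior:
  assumes "convex S"
  shows "perimK K S = perimK K (interior (S::'a::euclidean_space set))"
proof -
  define N where "N = S - interior S"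
  have "N \<subseteq> frontier S" using closure_subset by (auto simp: N_def frontier_def)
  then have "negligible N" using negligible_convex_frontier[OF assms] negligible_subset by blast
  then have Nn: "N \<in> null_sets lebesgue" by (simp add: negligible_iff_null_sets)
  have eq: "indicator S x = (indicator (interior S) x :: real)" if "x \<notin> N" for x
    using that interior_subset by (auto simp: N_def indicator_def)
  show ?thesis unfolding perimK_def
  proof (intro arg_cong[where f="\<lambda>t. (1/2) * t"] nn_integral_cong_AE)
    show "AE x in lebesgue. (\<integral>\<^sup>+ y. ennreal \<bar>indicator S x - indicator S y\<bar> * K (x - y) \<partial>lebesgue) =
        (\<integral>\<^sup>+ y. ennreal \<bar>indicator (interior S) x - indicator (interior S) y\<bar> * K (x - y) \<partial>lebesgue)"
      using AE_not_in[OF Nn]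
    proof eventually_elim
      case (elim x)
      show ?case
        using AE_not_in[OF Nn]
        by (rule nn_integral_cong_AE[OF eventually_mono]) (simp add: eq elim)
    qed
  qed
qed

lemma perim_formula:
  fixes S :: "'a::euclidean_space set"
  assumes oS: "open S" and Km: "K \<in> borel_measurable lebesgue"
  shows "perimK K S = (1/2) * (\<integral>\<^sup>+z. K z * (emeasure lebesgue {x\<in>S. x - z \<notin> S}
            + emeasure lebesgue {x\<in>S. x - (-z) \<notin> S}) \<partial>lebesgue)"
proof -
  have Sb: "S \<in> sets borel" using oS by simp
  have Sl: "S \<in> sets lebesgue" using oS by simp
  define G where "G x z = ennreal \<bar>indicator S x - indicator S (x - z)\<bar> * K z" for x z
  have inner: "(\<integral>\<^sup>+ y. ennreal \<bar>indicator S x - indicator S y\<bar> * K (x - y) \<partial>lebesgue)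
      = (\<integral>\<^sup>+ z. G x z \<partial>lebesgue)" for x
  proof -
    have m1: "(\<lambda>y. K (x - y)) \<in> borel_measurable lebesgue"
      using measurable_compose[OF reflect_meas Km] by simp
    have "(\<lambda>y. ennreal \<bar>indicator S x - indicator S y\<bar> * K (x - y)) \<in> borel_measurable lebesgue"
      using m1 Sl by measurable
    then show ?thesis unfolding G_def by (subst nn_integral_reflect[where x=x]) simp_all
  qed
  have f1: "(\<lambda>p. fst p - snd p) \<in> borel_measurable (lebesgue \<Otimes>\<^sub>M (lebesgue :: 'a measure))"
    using measurable_compose[OF measurable_fst[of "lebesgue::'a measure" "lebesgue::'a measure"] id_leb_borel]
      measurable_compose[OF measurable_snd[of "lebesgue::'a measure" "lebesgue::'a measure"] id_leb_borel]
    by (intro borel_measurable_diff) simp_all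
  have f2: "(\<lambda>p. indicator S (fst p - snd p) :: real) \<in> borel_measurable (lebesgue \<Otimes>\<^sub>M (lebesgue :: 'a measure))"
    using measurable_compose[OF f1 borel_measurable_indicator[OF Sb]] by simp
  have Gm: "case_prod G \<in> borel_measurable (lebesgue \<Otimes>\<^sub>M lebesgue)"
    unfolding G_def using f2 Sl Km by measurable
  have swap: "(\<integral>\<^sup>+ x. (\<integral>\<^sup>+ z. G x z \<partial>lebesgue) \<partial>lebesgue) = (\<integral>\<^sup>+ z. (\<integral>\<^sup>+ x. G x z \<partial>lebesgue) \<partial>lebesgue)"
    using pair_sigma_finite.Fubini'[OF psf_leb Gm] by simp
  have col: "(\<integral>\<^sup>+ x. G x z \<partial>lebesgue) = K z * (emeasure lebesgue {x\<in>S. x - z \<notin> S}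
            + emeasure lebesgue {x\<in>S. x - (-z) \<notin> S})" for z
  proof -
    define A where "A = {x\<in>S. x - z \<notin> S}"
    define B where "B = {x. x \<notin> S \<and> x - z \<in> S}"
    have Am: "A \<in> sets lebesgue"
    proof -
      have "A = S \<inter> (UNIV - {x. x - z \<in> S})" by (auto simp: A_def)
      then show ?thesis using Sl transl_sets[OF Sl, of z] by auto
    qed
    have Bm: "B \<in> sets lebesgue"
    proof -
      have "B = {x. x - z \<in> S} - S" by (auto simp: B_def)
      then show ?thesis using Sl transl_sets[OF Sl, of z] by auto
    qed
    have GA: "G x z = indicator (A \<union> B) x * K z" for x
      by (auto simp: G_def A_def B_def indicator_def)
    have "(\<integral>\<^sup>+ x. G x z \<partial>lebesgue) = (\<integral>\<^sup>+ x. indicator (A \<union> B) x \<partial>lebesgue) * K z"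
      unfolding GA by (rule nn_integral_multc) (use Am Bm in auto)
    also have "\<dots> = emeasure lebesgue (A \<union> B) * K z"
      using Am Bm by simp
    also have "emeasure lebesgue (A \<union> B) = emeasure lebesgue A + emeasure lebesgue B"
      by (rule plus_emeasure[symmetric]) (use Am Bm in \<open>auto simp: A_def B_def\<close>)
    also have "B = (\<lambda>w. w - (-z)) ` {x\<in>S. x - (-z) \<notin> S}"
      by (auto simp: B_def image_iff) (metis diff_add_cancel)
    also have "emeasure lebesgue \<dots> = emeasure lebesgue {x\<in>S. x - (-z) \<notin> S}"
      by (rule emeasure_transl)
    finally show ?thesis by (simp add: A_def mult.commute)
  qed
  show ?thesis unfolding perimK_def inner swap col ..
qed


theorem mainTheorem2:
  fixes K :: "'a::euclidean_space \<Rightarrow> ennreal" and E C :: "'a set"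
  assumes "DIM('a) \<ge> 2"
    and "is_kernel K"
    and "convex_body E"
    and "convex C"
  shows "perimK K (E \<inter> C) \<le> perimK K E"
proof -
  have Km: "K \<in> borel_measurable lebesgue" using assms(2) by (simp add: is_kernel_def)
  have cE: "convex E" and bE: "bounded E" using assms(3) by (auto simp: convex_body_def compact_imp_bounded)
  have cF: "convex (E \<inter> C)" using cE assms(4) by (rule convex_Int)
  define E' where "E' = interior E"
  define F' where "F' = interior (E \<inter> C)"
  have sub: "F' \<subseteq> E'" unfolding E'_def F'_def by (intro interior_mono) auto
  have cF': "convex F'" "convex E'" unfolding F'_def E'_def using convex_interior[OF cF] convex_interior[OF cE] by auto
  have bE': "bounded E'" using bE interior_subset bounded_subset unfolding E'_def by blast
  have oF': "open F'" and oE': "open E'" by (auto simp: F'_def E'_def)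
  have mono: "emeasure lebesgue {x\<in>F'. x - z \<notin> F'} \<le> emeasure lebesgue {x\<in>E'. x - z \<notin> E'}" for z
    using gmono[OF cF'(1) sub bE'] oF' oE' by simp
  have "perimK K (E \<inter> C) = perimK K F'" unfolding F'_def by (rule perim_interior[OF cF])
  also have "\<dots> = (1/2) * (\<integral>\<^sup>+z. K z * (emeasure lebesgue {x\<in>F'. x - z \<notin> F'}
            + emeasure lebesgue {x\<in>F'. x - (-z) \<notin> F'}) \<partial>lebesgue)"
    by (rule perim_formula[OF oF' Km])
  also have "\<dots> \<le> (1/2) * (\<integral>\<^sup>+z. K z * (emeasure lebesgue {x\<in>E'. x - z \<notin> E'}
            + emeasure lebesgue {x\<in>E'. x - (-z) \<notin> E'}) \<partial>lebesgue)"
    by (intro mult_left_mono nn_integral_mono add_mono mono) auto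
  also have "\<dots> = perimK K E'"
    by (rule perim_formula[OF oE' Km, symmetric])
  also have "\<dots> = perimK K E" unfolding E'_def by (rule perim_interior[OF cE, symmetric])
  finally show ?thesis .
qed

end
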